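(* Consider a classical elementary system with timelike four-momentum in explicit form (i) or (ii). Let $\mathbf A\colon\Gamma\to\mathbb R^3$ be $C^1$, invariant under spatial translations ($\{P_a,A_b\}=0$), transforming as a vector under spatial rotations ($\{J_{ab},A_c\}=\delta_{ac}A_b-\delta_{bc}A_a$), and invariant under time reversal ($\mathbf A\circ T_u=\mathbf A$). Then $\mathbf A\cdot\mathbf P=0$ on all of $\Gamma$.
   Context: Fix a positively oriented orthonormal basis $\{e_0=u,\dots,e_3\}$ of Minkowski space (signature $(-,+,+,+)$), speed of light $c>0$, $m>0$. Spatial indices raised/lowered with Kronecker delta; ${}^{(3)}\varepsilon_{abc}$ Levi-Civita symbol; $(\mathbf A\times\mathbf B)_a={}^{(3)}\varepsilon_{abc}A^bB^c$. Poisson bracket: $\omega(X_f,\cdot)=df$, $\{f,g\}=\omega(X_f,X_g)$, so $\{x^a,p_b\}=\delta^a_b$. (i) spin zero ($\mathbf s:=0$): $\Gamma=T^*\mathbb R^3\ni(\mathbf x,\mathbf p)$, $\omega=dx^a\wedge dp_a$; $P_a=p_a$, $P_0=-\sqrt{m^2c^2+\mathbf p^2}$, $J_{ab}=x_ap_b-x_bp_a$, $J_{a0}=P_0x_a$; time reversal $T_u(\mathbf x,\mathbf p)=(\mathbf x,-\mathbf p)$. (ii) spin $S>0$: $\Gamma=T^*\mathbb R^3\times\mathsf S^2\ni(\mathbf x,\mathbf p,\hat{\mathbf s})$, $\omega=dx^a\wedge dp_a+S\,d\Omega^2$; $\mathbf s=S\hat{\mathbf s}$, $\{s_a,s_b\}={}^{(3)}\varepsilon_{abc}s^c$,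 $\mathbf s$ Poisson-commuting with $\mathbf x,\mathbf p$; $P_a=p_a$, $P_0=-\sqrt{m^2c^2+\mathbf p^2}$, $J_{ab}=x_ap_b-x_bp_a+{}^{(3)}\varepsilon_{abc}s^c$, $J_{a0}=P_0x_a-\frac{(\mathbf p\times\mathbf s)_a}{mc-P_0}$; time reversal $T_u(\mathbf x,\mathbf p,\hat{\mathbf s})=(\mathbf x,-\mathbf p,-\hat{\mathbf s})$. *)

theory Defs
  imports "HOL-Analysis.Analysis"
begin

text \<open>Spin-S phase space: points (x,p,s) :: (real^3) \<times> (real^3) \<times> (real^3) with norm s = 1
  (s plays the role of the unit vector s-hat on the sphere S^2).\<close>

definition eps3 :: "3 \<Rightarrow> 3 \<Rightarrow> 3 \<Rightarrow> real" where
  "eps3 a b c =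
     (if (a,b,c) \<in> {(1,2,3),(2,3,1),(3,1,2)} then 1
      else if (a,b,c) \<in> {(1,3,2),(3,2,1),(2,1,3)} then -1 else 0)"

definition pd :: "('a::real_normed_vector \<Rightarrow> real) \<Rightarrow> 'a \<Rightarrow> 'a \<Rightarrow> real" where
  "pd f z v = frechet_derivative f (at z) v"

text \<open>C^1 on an open set U: differentiable at every point of U with continuous derivative
  (continuity of all directional derivatives, equivalent in finite dimension).\<close>
definition C1_on :: "'a::real_normed_vector set \<Rightarrow> ('a \<Rightarrow> real) \<Rightarrow> bool" where
  "C1_on U f \<longleftrightarrow> (\<forall>z\<in>U. f differentiable (at z)) \<and>
     (\<forall>v. continuous_on U (\<lambda>z. frechet_derivative f (at z) v))"

text \<open>Poisson bracket on T*R^3 with omega = dx^a wedge dp_a, so {x^a,p_b} = delta.\<close>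
definition pb0 :: "((real^3) \<times> (real^3) \<Rightarrow> real) \<Rightarrow> ((real^3) \<times> (real^3) \<Rightarrow> real)
                   \<Rightarrow> (real^3) \<times> (real^3) \<Rightarrow> real" where
  "pb0 f g z = (\<Sum>a\<in>UNIV.
      pd f z (axis a 1, 0) * pd g z (0, axis a 1) - pd f z (0, axis a 1) * pd g z (axis a 1, 0))"

text \<open>Degree-0 homogeneous extension in the sphere variable: a function on
  Gamma = T*R^3 x S^2 is C^1 iff this extension is C^1 on the open set s \<noteq> 0.\<close>
definition hext :: "((real^3) \<times> (real^3) \<times> (real^3) \<Rightarrow> 'b) \<Rightarrow> (real^3) \<times> (real^3) \<times> (real^3) \<Rightarrow> 'b" where
  "hext f z = f (fst z, fst (snd z), sgn (snd (snd z)))"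

text \<open>Poisson bracket on T*R^3 x S^2 with omega = dx^a wedge dp_a + S dOmega, normalised by
  {s_a,s_b} = eps_abc s^c for s = S s-hat, i.e. {f,g}_sphere = (1/S) s-hat . (grad f x grad g).\<close>
definition pbS :: "real \<Rightarrow> ((real^3) \<times> (real^3) \<times> (real^3) \<Rightarrow> real) \<Rightarrow> ((real^3) \<times> (real^3) \<times> (real^3) \<Rightarrow> real)
                   \<Rightarrow> (real^3) \<times> (real^3) \<times> (real^3) \<Rightarrow> real" where
  "pbS S f g z =
     (\<Sum>a\<in>UNIV.
        pd (hext f) z (axis a 1, 0, 0) * pd (hext g) z (0, axis a 1, 0)
      - pd (hext f) z (0, axis a 1, 0) * pd (hext g) z (axis a 1, 0, 0))
   + (1 / S) * (\<Sum>a\<in>UNIV. \<Sum>b\<in>UNIV. \<Sum>c\<in>UNIV.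
        eps3 a b c * (snd (snd z)) $ c * pd (hext f) z (0, 0, axis a 1) * pd (hext g) z (0, 0, axis b 1))"

definition P0 :: "3 \<Rightarrow> (real^3) \<times> (real^3) \<Rightarrow> real" where
  "P0 a z = snd z $ a"
definition J0 :: "3 \<Rightarrow> 3 \<Rightarrow> (real^3) \<times> (real^3) \<Rightarrow> real" where
  "J0 a b z = fst z $ a * snd z $ b - fst z $ b * snd z $ a"

text \<open>Generators, case (ii), with s = S * s-hat.\<close>
definition PS :: "3 \<Rightarrow> (real^3) \<times> (real^3) \<times> (real^3) \<Rightarrow> real" where
  "PS a z = fst (snd z) $ a"
definition JS :: "real \<Rightarrow> 3 \<Rightarrow> 3 \<Rightarrow> (real^3) \<times> (real^3) \<times> (real^3) \<Rightarrow> real" where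
  "JS S a b z = fst z $ a * fst (snd z) $ b - fst z $ b * fst (snd z) $ a
     + (\<Sum>c\<in>UNIV. eps3 a b c * (S * snd (snd z) $ c))"

end

theory Submission
  imports Defs
begin


lemma eps3_vals[simp]:
  "eps3 1 2 3 = 1" "eps3 2 3 1 = 1" "eps3 3 1 2 = 1"
  "eps3 1 3 2 = -1" "eps3 3 2 1 = -1" "eps3 2 1 3 = -1"
  "eps3 a a c = 0" "eps3 a c a = 0" "eps3 c a a = 0"
  by (auto simp: eps3_def)

lemma alg_core:
  fixes q s n :: "real^3" and P Q :: "3 \<Rightarrow> 3 \<Rightarrow> real" and F :: "3 \<Rightarrow> real"
  assumes rel: "\<And>a b c. q$b * P c a - q$a * P c b + s$b * Q c a - s$a * Q c b
       = (if a = c then F b else 0) - (if b = c then F a else 0)"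
  shows "(\<Sum>c\<in>UNIV. ((\<Sum>a\<in>UNIV. (cross3 n q)$a * P c a) + (\<Sum>a\<in>UNIV. (cross3 n s)$a * Q c a)) * q$c
          + F c * (cross3 n q)$c) = 0"
proof -
  define R where "R a b c = q$b * P c a - q$a * P c b + s$b * Q c a - s$a * Q c b
       - ((if a = c then F b else 0) - (if b = c then F a else 0))" for a b c
  have R0: "R a b c = 0" for a b c by (simp add: R_def rel)
  have "(\<Sum>c\<in>UNIV. ((\<Sum>a\<in>UNIV. (cross3 n q)$a * P c a) + (\<Sum>a\<in>UNIV. (cross3 n s)$a * Q c a)) * q$c
          + F c * (cross3 n q)$c) = n$1 * (\<Sum>c\<in>UNIV. q$c * R 3 2 c) + n$2 * (\<Sum>c\<in>UNIV. q$c * R 1 3 c)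
          + n$3 * (\<Sum>c\<in>UNIV. q$c * R 2 1 c)"
    by (simp add: R_def sum_3 cross_components algebra_simps)
  then show ?thesis by (simp add: R0)
qed

lemma sphere_id:
  fixes s :: "real^3" and Q :: "3 \<Rightarrow> real"
  shows "(\<Sum>a'\<in>UNIV. \<Sum>b'\<in>UNIV. \<Sum>c'\<in>UNIV. eps3 a' b' c' * s$c' *
      (\<Sum>k\<in>UNIV. eps3 a b k * (S * ((if k = a' then 1 else 0) - s$a' * s$k))) * Q b')
     = S * (s$b * Q a - s$a * Q b)"
  using exhaust_3[of a] exhaust_3[of b]
  by (elim disjE) (simp_all add: sum_3 algebra_simps)



lemma lin_exp3:
  fixes L :: "(real^3) \<times> (real^3) \<times> (real^3) \<Rightarrow> real"
  assumes "linear L"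
  shows "L (u, v, w) = (\<Sum>a\<in>UNIV. u$a * L (axis a 1, 0, 0)) + (\<Sum>a\<in>UNIV. v$a * L (0, axis a 1, 0))
     + (\<Sum>a\<in>UNIV. w$a * L (0, 0, axis a 1))"
proof -
  have e: "(u, v, w) = (\<Sum>a\<in>UNIV. u$a *\<^sub>R (axis a 1, 0, 0)) + (\<Sum>a\<in>UNIV. v$a *\<^sub>R (0, axis a 1, 0))
     + (\<Sum>a\<in>UNIV. w$a *\<^sub>R (0, 0, axis a 1))"
    by (simp add: sum_3 vec_eq_iff forall_3 axis_def prod_eq_iff)
  show ?thesis
    by (subst e, simp only: linear_add[OF assms] linear_sum[OF assms] linear_scale[OF assms]) simp
qed

lemma lin_exp2:
  fixes L :: "(real^3) \<times> (real^3) \<Rightarrow> real"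
  assumes "linear L"
  shows "L (u, v) = (\<Sum>a\<in>UNIV. u$a * L (axis a 1, 0)) + (\<Sum>a\<in>UNIV. v$a * L (0, axis a 1))"
proof -
  have e: "(u, v) = (\<Sum>a\<in>UNIV. u$a *\<^sub>R (axis a 1, 0)) + (\<Sum>a\<in>UNIV. v$a *\<^sub>R (0, axis a 1))"
    by (simp add: sum_3 vec_eq_iff forall_3 axis_def prod_eq_iff)
  show ?thesis
    by (subst e, simp only: linear_add[OF assms] linear_sum[OF assms] linear_scale[OF assms]) simp
qed

lemma path_deriv:
  fixes p m :: "real^3"
  shows "((\<lambda>t. cos t *\<^sub>R p + sin t *\<^sub>R m) has_derivative (\<lambda>d. d *\<^sub>R (- sin t *\<^sub>R p + cos t *\<^sub>R m))) (at t)"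
  by (auto intro!: derivative_eq_intros simp: algebra_simps)



lemma unit_perp:
  fixes p s :: "real^3"
  obtains n where "norm n = 1" "n \<bullet> p = 0" "n \<bullet> s = 0"
proof -
  have "dim {p, s} \<le> card {p, s}" by (rule dim_le_card') simp
  also have "\<dots> \<le> 2" by (simp add: card_insert_le_m1)
  finally have "dim {p, s} < DIM(real^3)" by simp
  then obtain n0 where n0: "n0 \<noteq> 0" "\<And>y. y \<in> span {p, s} \<Longrightarrow> orthogonal n0 y"
    using orthogonal_to_subspace_exists by metis
  have "orthogonal n0 p" by (rule n0(2)) (simp add: span_base)
  have "orthogonal n0 s" by (rule n0(2)) (simp add: span_base)
  then show ?thesis
    using n0(1) \<open>orthogonal n0 p\<close> by (intro that[of "n0 /\<^sub>R norm n0"]) (auto simp: orthogonal_def)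
qed

lemma circ_facts:
  fixes p n :: "real^3"
  assumes "norm n = 1" "n \<bullet> p = 0"
  shows "cross3 n (cos t *\<^sub>R p + sin t *\<^sub>R cross3 n p) = - sin t *\<^sub>R p + cos t *\<^sub>R cross3 n p"
    and "norm (cos t *\<^sub>R p + sin t *\<^sub>R cross3 n p) = norm p"
proof -
  have nn: "n \<bullet> n = 1" using assms(1) by (simp add: norm_eq_1)
  show "cross3 n (cos t *\<^sub>R p + sin t *\<^sub>R cross3 n p) = - sin t *\<^sub>R p + cos t *\<^sub>R cross3 n p"
    by (simp add: cross_add_right cross_mult_right Lagrange assms nn)
  have nc: "norm (cross3 n p) = norm p"
    using norm_cross_dot[of n p] assms by (simp add: power2_eq_iff_nonneg)
  have pm: "orthogonal (cos t *\<^sub>R p) (sin t *\<^sub>R cross3 n p)"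
    by (simp add: orthogonal_def dot_cross_self)
  have "(norm (cos t *\<^sub>R p + sin t *\<^sub>R cross3 n p))^2 = (norm p)^2"
    unfolding norm_add_Pythagorean[OF pm]
    by (simp add: nc power_mult_distrib flip: distrib_right)
  then show "norm (cos t *\<^sub>R p + sin t *\<^sub>R cross3 n p) = norm p"
    by (rule power2_eq_imp_eq) simp_all
qed



lemma core:
  fixes F :: "3 \<Rightarrow> (real^3) \<times> (real^3) \<times> (real^3) \<Rightarrow> real"
  assumes diff: "\<And>c x p s. norm s = 1 \<Longrightarrow> F c differentiable (at (x, p, s))"
    and rel: "\<And>a b c x p s. norm s = 1 \<Longrightarrow>
      p$b * pd (F c) (x, p, s) (0, axis a 1, 0) - p$a * pd (F c) (x, p, s) (0, axis b 1, 0)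
      + s$b * pd (F c) (x, p, s) (0, 0, axis a 1) - s$a * pd (F c) (x, p, s) (0, 0, axis b 1)
      = (if a = c then F b (x, p, s) else 0) - (if b = c then F a (x, p, s) else 0)"
    and tr: "\<And>c x p s. norm s = 1 \<Longrightarrow> F c (x, -p, -s) = F c (x, p, s)"
    and s1: "norm s = 1"
  shows "(\<Sum>c\<in>UNIV. F c (x, p, s) * p$c) = 0"
proof -
  obtain n :: "real^3" where n: "norm n = 1" "n \<bullet> p = 0" "n \<bullet> s = 0" by (rule unit_perp)
  define q where "q t = cos t *\<^sub>R p + sin t *\<^sub>R cross3 n p" for t
  define r where "r t = cos t *\<^sub>R s + sin t *\<^sub>R cross3 n s" for t
  define h where "h t = (\<Sum>c\<in>UNIV. F c (x, q t, r t) * q t $ c)" for t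
  have r1: "norm (r t) = 1" for t using circ_facts(2)[OF n(1,3)] s1 by (simp add: r_def)
  have hd: "DERIV h t :> 0" for t
  proof -
    define z where "z = (x, q t, r t)"
    define q' where "q' = cross3 n (q t)"
    define r' where "r' = cross3 n (r t)"
    have q'e: "q' = - sin t *\<^sub>R p + cos t *\<^sub>R cross3 n p"
      unfolding q'_def q_def by (rule circ_facts(1)[OF n(1,2)])
    have r'e: "r' = - sin t *\<^sub>R s + cos t *\<^sub>R cross3 n s"
      unfolding r'_def r_def by (rule circ_facts(1)[OF n(1,3)])
    have dq: "(q has_derivative (\<lambda>d. d *\<^sub>R q')) (at t)"
      unfolding q'e q_def[abs_def] by (rule path_deriv)
    have dr: "(r has_derivative (\<lambda>d. d *\<^sub>R r')) (at t)"
      unfolding r'e r_def[abs_def] by (rule path_deriv)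
    have dg: "((\<lambda>t. (x, q t, r t)) has_derivative (\<lambda>d. d *\<^sub>R (0, q', r'))) (at t)"
      by (auto intro!: derivative_eq_intros dq dr)
    have dF: "(F c has_derivative frechet_derivative (F c) (at z)) (at z)" for c
      using diff[OF r1[of t]] by (simp add: z_def frechet_derivative_works)
    have linF: "linear (frechet_derivative (F c) (at z))" for c
      using diff[OF r1[of t]] by (simp add: z_def linear_frechet_derivative)
    have dqc: "((\<lambda>t. q t $ c) has_derivative (\<lambda>d. d * q' $ c)) (at t)" for c
      using bounded_linear.has_derivative[OF bounded_linear_vec_nth dq] by simp
    have dFc: "((\<lambda>t. F c (x, q t, r t)) has_derivative
                  (\<lambda>d. frechet_derivative (F c) (at z) (d *\<^sub>R (0, q', r')))) (at t)" for c
      using has_derivative_compose[OF dg, of "F c"] dF[of c] by (simp add: z_def)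
    have dh: "(h has_derivative (\<lambda>d. \<Sum>c\<in>UNIV. frechet_derivative (F c) (at z) (d *\<^sub>R (0, q', r')) * q t $ c
                 + F c z * (d * q' $ c))) (at t)"
      unfolding h_def[abs_def] z_def
      apply (rule has_derivative_sum)
      apply (rule has_derivative_eq_rhs[OF has_derivative_mult[OF dFc[unfolded z_def] dqc]])
      by (simp add: algebra_simps fun_eq_iff)
    have H: "(\<Sum>c\<in>UNIV. frechet_derivative (F c) (at z) (0, q', r') * q t $ c + F c z * q' $ c) = 0"
    proof -
      have e: "frechet_derivative (F c) (at z) (0, q', r') =
          (\<Sum>a\<in>UNIV. q'$a * pd (F c) z (0, axis a 1, 0)) + (\<Sum>a\<in>UNIV. r'$a * pd (F c) z (0, 0, axis a 1))" for c
        using lin_exp3[OF linF[of c], of 0 q' r'] by (simp add: pd_def)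
      have R: "q t$b * pd (F c) z (0, axis a 1, 0) - q t$a * pd (F c) z (0, axis b 1, 0)
        + r t$b * pd (F c) z (0, 0, axis a 1) - r t$a * pd (F c) z (0, 0, axis b 1)
        = (if a = c then F b z else 0) - (if b = c then F a z else 0)" for a b c
        unfolding z_def by (rule rel[OF r1])
      show ?thesis unfolding e unfolding q'_def r'_def
        by (rule alg_core[where P="\<lambda>c a. pd (F c) z (0, axis a 1, 0)" and Q="\<lambda>c a. pd (F c) z (0, 0, axis a 1)"
              and F = "\<lambda>c. F c z", OF R])
    qed
    have "(h has_derivative (*) 0) (at t)"
    proof (rule has_derivative_eq_rhs[OF dh])
      show "(\<lambda>d. \<Sum>c\<in>UNIV. frechet_derivative (F c) (at z) (d *\<^sub>R (0, q', r')) * q t $ c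
                 + F c z * (d * q' $ c)) = (\<lambda>d. 0 * d)"
      proof
        fix d :: real
        have "(\<Sum>c\<in>UNIV. frechet_derivative (F c) (at z) (d *\<^sub>R (0, q', r')) * q t $ c
                 + F c z * (d * q' $ c)) = d * (\<Sum>c\<in>UNIV. frechet_derivative (F c) (at z) (0, q', r') * q t $ c + F c z * q' $ c)"
          by (simp add: linear_scale[OF linF] sum_distrib_left algebra_simps del: scaleR_Pair)
        then show "(\<Sum>c\<in>UNIV. frechet_derivative (F c) (at z) (d *\<^sub>R (0, q', r')) * q t $ c
                 + F c z * (d * q' $ c)) = 0 * d" using H by simp
      qed
    qed
    then show ?thesis unfolding has_field_derivative_def .
  qed
  have "h pi = h 0" using hd DERIV_isconst_all by blast
  then have "(\<Sum>c\<in>UNIV. F c (x, -p, -s) * (- p $ c)) = (\<Sum>c\<in>UNIV. F c (x, p, s) * p $ c)"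
    by (simp add: h_def q_def r_def)
  then have "- (\<Sum>c\<in>UNIV. F c (x, p, s) * p $ c) = (\<Sum>c\<in>UNIV. F c (x, p, s) * p $ c)"
    by (simp add: tr[OF s1] sum_negf)
  then show ?thesis by linarith
qed



lemma sgn_deriv:
  fixes s :: "real^3"
  assumes "norm s = 1"
  shows "(sgn has_derivative (\<lambda>w. w - (s \<bullet> w) *\<^sub>R s)) (at s)"
proof -
  have s0: "s \<noteq> 0" using assms by auto
  have "((\<lambda>s. inverse (norm s) *\<^sub>R s) has_derivative
     (\<lambda>w. inverse (norm s) *\<^sub>R w + (- (inverse (norm s) * ((w \<bullet> sgn s) * inverse (norm s)))) *\<^sub>R s)) (at s)"
    using s0 by (auto intro!: derivative_eq_intros has_derivative_norm)
  moreover have "sgn = (\<lambda>s::real^3. inverse (norm s) *\<^sub>R s)" by (auto simp: sgn_div_norm fun_eq_iff divide_inverse_commute)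
  ultimately show ?thesis using assms by (simp add: sgn_div_norm inner_commute)
qed

lemma d_fst_nth: "((\<lambda>z::(real^3)\<times>'b::real_normed_vector. fst z $ i) has_derivative (\<lambda>v. fst v $ i)) (at z)"
  by (intro bounded_linear_imp_has_derivative bounded_linear_compose[OF bounded_linear_vec_nth] bounded_linear_fst)

lemma d_fst_snd_nth: "((\<lambda>z::'a::real_normed_vector\<times>(real^3)\<times>'b::real_normed_vector. fst (snd z) $ i) has_derivative (\<lambda>v. fst (snd v) $ i)) (at z)"
  by (intro bounded_linear_imp_has_derivative bounded_linear_compose[OF bounded_linear_vec_nth]
        bounded_linear_compose[OF bounded_linear_fst] bounded_linear_snd)

lemma hext_PS: "hext (PS a) = (\<lambda>z. fst (snd z) $ a)"
  by (simp add: hext_def PS_def fun_eq_iff)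

lemma pd_PS: "pd (hext (PS a)) z v = fst (snd v) $ a"
proof -
  have "((\<lambda>z::(real^3)\<times>(real^3)\<times>(real^3). fst (snd z) $ a) has_derivative (\<lambda>v. fst (snd v) $ a)) (at z)"
    by (intro bounded_linear_imp_has_derivative bounded_linear_compose[OF bounded_linear_vec_nth]
        bounded_linear_compose[OF bounded_linear_fst] bounded_linear_snd)
  then show ?thesis unfolding pd_def hext_PS by (simp add: frechet_derivative_at[symmetric])
qed

lemma pd_JS:
  assumes "norm s = 1"
  shows "pd (hext (JS S a b)) (x, p, s) (u, v, w) = u$a * p$b + x$a * v$b - u$b * p$a - x$b * v$a
     + (\<Sum>c\<in>UNIV. eps3 a b c * (S * (w$c - (s \<bullet> w) * s$c)))"
proof -
  have e: "hext (JS S a b) = (\<lambda>z. fst z $ a * fst (snd z) $ b - fst z $ b * fst (snd z) $ a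
     + (\<Sum>c\<in>UNIV. eps3 a b c * (S * sgn (snd (snd z)) $ c)))"
    by (simp add: hext_def JS_def fun_eq_iff)
  have ds: "((\<lambda>z::(real^3)\<times>(real^3)\<times>(real^3). sgn (snd (snd z))) has_derivative
      (\<lambda>v. snd (snd v) - (s \<bullet> snd (snd v)) *\<^sub>R s)) (at (x, p, s))"
  proof -
    have dss: "((\<lambda>z::(real^3)\<times>(real^3)\<times>(real^3). snd (snd z)) has_derivative (\<lambda>v. snd (snd v))) (at (x, p, s))"
      by (intro bounded_linear_imp_has_derivative bounded_linear_compose[OF bounded_linear_snd] bounded_linear_snd)
    show ?thesis using has_derivative_compose[OF dss, where g=sgn] sgn_deriv[OF assms] by simp
  qed
  have dsc: "((\<lambda>z::(real^3)\<times>(real^3)\<times>(real^3). sgn (snd (snd z)) $ c) has_derivative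
      (\<lambda>v. (snd (snd v) - (s \<bullet> snd (snd v)) *\<^sub>R s) $ c)) (at (x, p, s))" for c
    using bounded_linear.has_derivative[OF bounded_linear_vec_nth ds] by simp
  have "(hext (JS S a b) has_derivative (\<lambda>(u, v, w). u$a * p$b + x$a * v$b - u$b * p$a - x$b * v$a
     + (\<Sum>c\<in>UNIV. eps3 a b c * (S * (w$c - (s \<bullet> w) * s$c))))) (at (x, p, s))"
    unfolding e
    by (auto intro!: derivative_eq_intros dsc d_fst_nth d_fst_snd_nth simp: fun_eq_iff algebra_simps split: prod.splits)
  then show ?thesis unfolding pd_def by (simp add: frechet_derivative_at[symmetric])
qed



lemma axis1_nth: "axis i (1::real) $ j = (if j = i then 1 else 0)"
  by (simp add: axis_def)

lemma case2:
  fixes A :: "(real^3) \<times> (real^3) \<times> (real^3) \<Rightarrow> real^3"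
  assumes S: "S > 0"
    and C1: "\<forall>b. C1_on {z. snd (snd z) \<noteq> 0} (hext (\<lambda>z. A z $ b))"
    and hP: "\<forall>a b x p s. norm s = 1 \<longrightarrow> pbS S (PS a) (\<lambda>w. A w $ b) (x, p, s) = 0"
    and hJ: "\<forall>a b c x p s. norm s = 1 \<longrightarrow> pbS S (JS S a b) (\<lambda>w. A w $ c) (x, p, s)
                 = (if a = c then A (x, p, s) $ b else 0) - (if b = c then A (x, p, s) $ a else 0)"
    and hT: "\<forall>x p s. norm s = 1 \<longrightarrow> A (x, - p, - s) = A (x, p, s)"
    and s1: "norm s = 1"
  shows "A (x, p, s) \<bullet> p = 0"
proof -
  define F where "F c = hext (\<lambda>z. A z $ c)" for c
  have hx: "F c (x, p, s) = A (x, p, s) $ c" if "norm s = 1" for c x p s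
    using that by (simp add: F_def hext_def sgn_div_norm)
  have diff: "F c differentiable (at (x, p, s))" if "norm s = 1" for c x p s
  proof -
    have "s \<noteq> 0" using that by auto
    then show ?thesis using C1 unfolding C1_on_def F_def by auto
  qed
  have X0: "pd (F b) (x, p, s) (axis a 1, 0, 0) = 0" if "norm s = 1" for a b x p s
    using hP[rule_format, OF that, of a b x p] exhaust_3[of a]
    by (auto simp: pbS_def pd_PS axis_def F_def sum_3)
  have rel: "p$b * pd (F c) (x, p, s) (0, axis a 1, 0) - p$a * pd (F c) (x, p, s) (0, axis b 1, 0)
      + s$b * pd (F c) (x, p, s) (0, 0, axis a 1) - s$a * pd (F c) (x, p, s) (0, 0, axis b 1)
      = (if a = c then F b (x, p, s) else 0) - (if b = c then F a (x, p, s) else 0)"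
    if "norm s = 1" for a b c x p s
  proof -
    let ?J = "pd (hext (JS S a b)) (x, p, s)"
    let ?G = "pd (F c) (x, p, s)"
    have e1: "pbS S (JS S a b) (\<lambda>w. A w $ c) (x, p, s) =
      (\<Sum>d\<in>UNIV. ?J (axis d 1, 0, 0) * ?G (0, axis d 1, 0) - ?J (0, axis d 1, 0) * ?G (axis d 1, 0, 0))
      + (1 / S) * (\<Sum>a'\<in>UNIV. \<Sum>b'\<in>UNIV. \<Sum>c'\<in>UNIV. eps3 a' b' c' * s$c' * ?J (0, 0, axis a' 1) * ?G (0, 0, axis b' 1))"
      unfolding pbS_def F_def by simp
    have e2: "(\<Sum>d\<in>UNIV. ?J (axis d 1, 0, 0) * ?G (0, axis d 1, 0) - ?J (0, axis d 1, 0) * ?G (axis d 1, 0, 0))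
       = p$b * ?G (0, axis a 1, 0) - p$a * ?G (0, axis b 1, 0)"
      using exhaust_3[of a] exhaust_3[of b]
      by (auto simp: pd_JS[OF that] X0[OF that] axis1_nth sum_3 algebra_simps)
    have e3: "(\<Sum>a'\<in>UNIV. \<Sum>b'\<in>UNIV. \<Sum>c'\<in>UNIV. eps3 a' b' c' * s$c' * ?J (0, 0, axis a' 1) * ?G (0, 0, axis b' 1))
       = S * (s$b * ?G (0, 0, axis a 1) - s$a * ?G (0, 0, axis b 1))"
      using sphere_id[of s a b S "\<lambda>b'. ?G (0, 0, axis b' 1)"]
      by (simp add: pd_JS[OF that] axis1_nth inner_axis)
    show ?thesis using hJ[rule_format, OF that, of a b c x p] S
      unfolding e1 e2 e3 by (cases "a = c"; cases "b = c"; simp add: hx[OF that] algebra_simps)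
  qed
  have "(\<Sum>c\<in>UNIV. F c (x, p, s) * p$c) = 0"
    by (rule core[OF diff rel]) (auto simp: F_def hext_def sgn_minus hT s1 sgn_div_norm)
  then show ?thesis using s1 by (simp add: hx inner_vec_def mult.commute)
qed



lemma pd_P0: "pd (P0 a) z v = snd v $ a"
proof -
  have "((\<lambda>z::(real^3)\<times>(real^3). snd z $ a) has_derivative (\<lambda>v. snd v $ a)) (at z)"
    by (intro bounded_linear_imp_has_derivative bounded_linear_compose[OF bounded_linear_vec_nth] bounded_linear_snd)
  then show ?thesis unfolding pd_def P0_def[abs_def] by (simp add: frechet_derivative_at[symmetric])
qed

lemma pd_J0: "pd (J0 a b) (x, p) (u, v) = u$a * p$b + x$a * v$b - u$b * p$a - x$b * v$a"
proof -
  have d1: "((\<lambda>z::(real^3)\<times>(real^3). snd z $ i) has_derivative (\<lambda>v. snd v $ i)) (at z)" for i z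
    by (intro bounded_linear_imp_has_derivative bounded_linear_compose[OF bounded_linear_vec_nth] bounded_linear_snd)
  have "(J0 a b has_derivative (\<lambda>(u, v). u$a * p$b + x$a * v$b - u$b * p$a - x$b * v$a)) (at (x, p))"
    unfolding J0_def[abs_def]
    by (auto intro!: derivative_eq_intros d1 d_fst_nth simp: fun_eq_iff algebra_simps split: prod.splits)
  then show ?thesis unfolding pd_def by (simp add: frechet_derivative_at[symmetric])
qed

lemma case1:
  fixes A :: "(real^3) \<times> (real^3) \<Rightarrow> real^3"
  assumes C1: "\<forall>b. C1_on UNIV (\<lambda>z. A z $ b)"
    and hP: "\<forall>a b z. pb0 (P0 a) (\<lambda>w. A w $ b) z = 0"
    and hJ: "\<forall>a b c z. pb0 (J0 a b) (\<lambda>w. A w $ c) z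
                 = (if a = c then A z $ b else 0) - (if b = c then A z $ a else 0)"
    and hT: "\<forall>x p. A (x, - p) = A (x, p)"
  shows "A (x, p) \<bullet> p = 0"
proof -
  define G where "G c = (\<lambda>w. A w $ c)" for c
  define F where "F c = (\<lambda>z::(real^3)\<times>(real^3)\<times>(real^3). G c (fst z, fst (snd z)))" for c
  have dG: "(G c has_derivative frechet_derivative (G c) (at (x, p))) (at (x, p))" for c x p
    using C1 unfolding C1_on_def G_def frechet_derivative_works by auto
  have dpi: "((\<lambda>z::(real^3)\<times>(real^3)\<times>(real^3). (fst z, fst (snd z))) has_derivative (\<lambda>z. (fst z, fst (snd z)))) (at z)" for z
    by (intro bounded_linear_imp_has_derivative bounded_linear_Pair bounded_linear_fst
        bounded_linear_compose[OF bounded_linear_fst] bounded_linear_snd)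
  have dF: "(F c has_derivative (\<lambda>v. frechet_derivative (G c) (at (x, p)) (fst v, fst (snd v)))) (at (x, p, s))" for c x p s
    unfolding F_def using has_derivative_compose[OF dpi, where g="G c"] dG by simp
  have diff: "F c differentiable (at (x, p, s))" for c x p s
    using dF[of c x p s] by (auto simp: differentiable_def)
  have pdF: "pd (F c) (x, p, s) (u, v, w) = pd (G c) (x, p) (u, v)" for c x p s u v w
    using dF[of c x p s] unfolding pd_def by (simp add: frechet_derivative_at[symmetric])
  have linG: "linear (pd (G c) (x, p))" for c x p
    unfolding pd_def using has_derivative_linear[OF dG[of c x p]] .
  have X0: "pd (G b) (x, p) (axis a 1, 0) = 0" for a b x p
    using hP[rule_format, of a b "(x, p)"] exhaust_3[of a]
    by (auto simp: pb0_def pd_P0 axis1_nth G_def sum_3)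
  have rel: "p$b * pd (F c) (x, p, s) (0, axis a 1, 0) - p$a * pd (F c) (x, p, s) (0, axis b 1, 0)
      + s$b * pd (F c) (x, p, s) (0, 0, axis a 1) - s$a * pd (F c) (x, p, s) (0, 0, axis b 1)
      = (if a = c then F b (x, p, s) else 0) - (if b = c then F a (x, p, s) else 0)" for a b c x p s
  proof -
    have z: "pd (G c) (x, p) (0, 0) = 0" using linear_0[OF linG] by (simp add: zero_prod_def)
    have e: "pb0 (J0 a b) (G c) (x, p) = p$b * pd (G c) (x, p) (0, axis a 1) - p$a * pd (G c) (x, p) (0, axis b 1)"
      using exhaust_3[of a] exhaust_3[of b]
      by (auto simp: pb0_def pd_J0 X0 axis1_nth sum_3 algebra_simps)
    have Fx: "F d (x, p, s) = A (x, p) $ d" for d by (simp add: F_def G_def)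
    show ?thesis using hJ[rule_format, of a b c "(x, p)"] e unfolding pdF z Fx G_def
      by (cases "a = c"; cases "b = c"; simp add: z[unfolded G_def] algebra_simps)
  qed
  have "(\<Sum>c\<in>UNIV. F c (x, p, axis 1 1) * p$c) = 0"
    by (rule core[OF diff rel]) (auto simp: F_def G_def hT)
  then show ?thesis by (simp add: F_def G_def inner_vec_def mult.commute)
qed


theorem mainTheorem10:
  shows
  "(\<forall>A :: (real^3) \<times> (real^3) \<Rightarrow> real^3.
      (\<forall>b. C1_on UNIV (\<lambda>z. A z $ b))
    \<and> (\<forall>a b z. pb0 (P0 a) (\<lambda>w. A w $ b) z = 0)
    \<and> (\<forall>a b c z. pb0 (J0 a b) (\<lambda>w. A w $ c) z
                 = (if a = c then A z $ b else 0) - (if b = c then A z $ a else 0))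
    \<and> (\<forall>x p. A (x, - p) = A (x, p))
    \<longrightarrow> (\<forall>x p. A (x, p) \<bullet> p = 0))
 \<and> (\<forall>S :: real. S > 0 \<longrightarrow>
     (\<forall>A :: (real^3) \<times> (real^3) \<times> (real^3) \<Rightarrow> real^3.
      (\<forall>b. C1_on {z. snd (snd z) \<noteq> 0} (hext (\<lambda>z. A z $ b)))
    \<and> (\<forall>a b x p s. norm s = 1 \<longrightarrow> pbS S (PS a) (\<lambda>w. A w $ b) (x, p, s) = 0)
    \<and> (\<forall>a b c x p s. norm s = 1 \<longrightarrow> pbS S (JS S a b) (\<lambda>w. A w $ c) (x, p, s)
                 = (if a = c then A (x, p, s) $ b else 0) - (if b = c then A (x, p, s) $ a else 0))
    \<and> (\<forall>x p s. norm s = 1 \<longrightarrow> A (x, - p, - s) = A (x, p, s))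
    \<longrightarrow> (\<forall>x p s. norm s = 1 \<longrightarrow> A (x, p, s) \<bullet> p = 0)))"
proof (intro conjI allI impI)
  fix A :: "(real^3) \<times> (real^3) \<Rightarrow> real^3" and x p :: "real^3"
  assume h: "(\<forall>b. C1_on UNIV (\<lambda>z. A z $ b))
    \<and> (\<forall>a b z. pb0 (P0 a) (\<lambda>w. A w $ b) z = 0)
    \<and> (\<forall>a b c z. pb0 (J0 a b) (\<lambda>w. A w $ c) z
                 = (if a = c then A z $ b else 0) - (if b = c then A z $ a else 0))
    \<and> (\<forall>x p. A (x, - p) = A (x, p))"
  show "A (x, p) \<bullet> p = 0" using h case1 by blast
next
  fix S :: real and A :: "(real^3) \<times> (real^3) \<times> (real^3) \<Rightarrow> real^3" and x p s :: "real^3"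
  assume S: "S > 0"
  assume h: "(\<forall>b. C1_on {z. snd (snd z) \<noteq> 0} (hext (\<lambda>z. A z $ b)))
    \<and> (\<forall>a b x p s. norm s = 1 \<longrightarrow> pbS S (PS a) (\<lambda>w. A w $ b) (x, p, s) = 0)
    \<and> (\<forall>a b c x p s. norm s = 1 \<longrightarrow> pbS S (JS S a b) (\<lambda>w. A w $ c) (x, p, s)
                 = (if a = c then A (x, p, s) $ b else 0) - (if b = c then A (x, p, s) $ a else 0))
    \<and> (\<forall>x p s. norm s = 1 \<longrightarrow> A (x, - p, - s) = A (x, p, s))"
  assume s1: "norm s = 1"
  show "A (x, p, s) \<bullet> p = 0" using h S s1 case2 by blast
qed

end
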